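(* Let $X$ be an $n$-dimensional real normed space and let $Y \subseteq X$ be a $k$-dimensional subspace, where $1 \leq k \leq n-1$. Then there exists $C>0$ (depending on $Y$) such that for every $k$-dimensional subspace $Y_0 \subseteq X$ we have $\lambda(Y_0, X) \leq \lambda(Y, X) + C\,d(Y, Y_0)$.
   Context: For a subspace $V\subseteq X$, $\lambda(V,X)$ is the infimum of the operator norms of linear projections $P:X\to V$ ($P|_V=\mathrm{id}_V$). For two $k$-dimensional subspaces $Y,Z$, $d(Y,Z)$ is the Hausdorff distance (with respect to the norm of $X$) between the unit spheres of $Y$ and $Z$. *)

theory Defs
  imports "HOL-Analysis.Analysis"
begin

definition proj_const :: "'a::real_normed_vector set \<Rightarrow> real" where
  "proj_const V = Inf {onorm P | P. linear P \<and> range P \<subseteq> V \<and> (\<forall>v\<in>V. P v = v)}"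

definition hausdorff_dist :: "'a::metric_space set \<Rightarrow> 'a set \<Rightarrow> real" where
  "hausdorff_dist S T = max (SUP x\<in>S. infdist x T) (SUP y\<in>T. infdist y S)"

definition unit_sphere_of :: "'a::real_normed_vector set \<Rightarrow> 'a set" where
  "unit_sphere_of V = {v \<in> V. norm v = 1}"

definition subspace_dist :: "'a::real_normed_vector set \<Rightarrow> 'a set \<Rightarrow> real" where
  "subspace_dist Y Z = hausdorff_dist (unit_sphere_of Y) (unit_sphere_of Z)"

end

theory Submission imports Defs begin

locale fdb =
  fixes B :: "'a::real_normed_vector set"
  assumes finB: "finite B" and indB: "independent B" and spanB: "span B = UNIV"
begin

abbreviation rep where "rep x b \<equiv> representation B x b"

lemma rep_add: "rep (x + y) b = rep x b + rep y b"
  using representation_add[OF indB, of y x] spanB by auto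

lemma rep_scale: "rep (c *\<^sub>R x) b = c * rep x b"
  using representation_scale[OF indB, of x c] spanB by auto

lemma rep_diff: "rep (x - y) b = rep x b - rep y b"
  using representation_diff[OF indB, of y x] spanB by auto

lemma rep_sum_eq: "(\<Sum>b\<in>B. rep x b *\<^sub>R b) = x"
  using sum_representation_eq[OF indB _ finB] spanB by auto

lemma rep_of_sum: "(\<And>b. b \<in> B \<Longrightarrow> rep (\<Sum>b\<in>B. c b *\<^sub>R b) b = c b)"
proof -
  fix b0 assume b0: "b0 \<in> B"
  have "rep (\<Sum>b\<in>B. c b *\<^sub>R b) b0 = (\<Sum>b\<in>B. rep (c b *\<^sub>R b) b0)"
    using representation_sum[OF indB, of B "\<lambda>b. c b *\<^sub>R b"] spanB by auto
  also have "\<dots> = (\<Sum>b\<in>B. c b * (if b0 = b then 1 else 0))"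
    by (rule sum.cong) (auto simp: rep_scale representation_basis[OF indB])
  also have "\<dots> = c b0" using b0 finB by (simp add: if_distrib cong: if_cong)
  finally show "rep (\<Sum>b\<in>B. c b *\<^sub>R b) b0 = c b0" .
qed

lemma coord_bound: "\<exists>m>0. \<forall>x. m * (\<Sum>b\<in>B. \<bar>rep x b\<bar>) \<le> norm x"
proof (rule ccontr)
  define s where "s x = (\<Sum>b\<in>B. \<bar>rep x b\<bar>)" for x
  assume "\<not> ?thesis"
  then have H: "\<forall>m>0. \<exists>x. m * s x > norm x" unfolding s_def by (auto simp: not_le)
  have "\<exists>y. s y = 1 \<and> norm y < 1 / real (Suc n)" for n
  proof -
    have "(1 / real (Suc n)) > 0" by simp
    then obtain x where x: "(1 / real (Suc n)) * s x > norm x" using H by blast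
    have "0 < (1 / real (Suc n)) * s x" using x norm_ge_zero[of x] by linarith
    then have sp: "s x > 0" by (simp add: zero_less_divide_iff)
    define y where "y = (1 / s x) *\<^sub>R x"
    have "s y = (1 / s x) * s x" unfolding s_def y_def rep_scale
      by (simp add: abs_mult sum_distrib_left)
    then have "s y = 1" using sp by simp
    moreover have "norm y = norm x / s x" using sp by (simp add: y_def)
    moreover have "norm x / s x < 1 / real (Suc n)"
    proof -
      have "norm x < s x / real (Suc n)" using x by simp
      then show ?thesis using sp by (simp add: pos_divide_less_eq mult.commute)
    qed
    ultimately show ?thesis by auto
  qed
  then obtain y where y: "\<And>n. s (y n) = 1" "\<And>n. norm (y n) < 1 / real (Suc n)" by metis
  define c where "c n = rep (y n)" for n
  have bnd: "bounded ((\<lambda>x. x b) ` range c)" if "b \<in> B" for b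
  proof -
    have "\<bar>c n b\<bar> \<le> 1" for n
    proof -
      have "\<bar>c n b\<bar> \<le> s (y n)" unfolding s_def c_def
        by (rule member_le_sum) (use that finB in auto)
      then show ?thesis using y(1) by simp
    qed
    then show ?thesis unfolding bounded_iff by auto
  qed
  from compact_lemma_general[where proj="\<lambda>c b. c b" and unproj="\<lambda>c. c" and basis=B and f=c,
      OF finB bnd]
  obtain l r where lr: "strict_mono r"
    "\<forall>e>0. eventually (\<lambda>n. \<forall>i\<in>B. dist (c (r n) i) (l i) < e) sequentially"
    by blast
  have conv: "(\<lambda>n. c (r n) i) \<longlonglongrightarrow> l i" if "i \<in> B" for i
  proof (rule tendstoI)
    fix e :: real assume "e > 0"
    with lr(2) have "eventually (\<lambda>n. \<forall>i\<in>B. dist (c (r n) i) (l i) < e) sequentially" by blast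
    then show "eventually (\<lambda>n. dist (c (r n) i) (l i) < e) sequentially"
      by eventually_elim (use that in auto)
  qed
  have "(\<lambda>n. \<Sum>b\<in>B. c (r n) b *\<^sub>R b) \<longlonglongrightarrow> (\<Sum>b\<in>B. l b *\<^sub>R b)"
    by (intro tendsto_intros conv)
  moreover have "(\<lambda>n. \<Sum>b\<in>B. c (r n) b *\<^sub>R b) = (\<lambda>n. y (r n))"
    unfolding c_def using rep_sum_eq by simp
  moreover have "y \<longlonglongrightarrow> 0"
  proof (rule tendsto_norm_zero_cancel, rule Lim_null_comparison[OF _ LIMSEQ_inverse_real_of_nat])
    show "\<forall>\<^sub>F n in sequentially. norm (norm (y n)) \<le> inverse (real (Suc n))"
      using y(2) by (simp add: less_imp_le divide_inverse)
  qed
  then have "(\<lambda>n. y (r n)) \<longlonglongrightarrow> 0" using lr(1) LIMSEQ_subseq_LIMSEQ[of y 0 r] by (simp add: o_def)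
  ultimately have z: "(\<Sum>b\<in>B. l b *\<^sub>R b) = 0" using LIMSEQ_unique by metis
  have l0: "\<forall>b\<in>B. l b = 0" using indB z dependent_finite[OF finB] by blast
  have "(\<lambda>n. \<Sum>b\<in>B. \<bar>c (r n) b\<bar>) \<longlonglongrightarrow> (\<Sum>b\<in>B. \<bar>l b\<bar>)"
    by (intro tendsto_intros conv)
  moreover have "(\<lambda>n. \<Sum>b\<in>B. \<bar>c (r n) b\<bar>) = (\<lambda>n. 1)" using y(1) unfolding s_def c_def by simp
  ultimately have "(\<Sum>b\<in>B. \<bar>l b\<bar>) = 1" using LIMSEQ_unique tendsto_const by metis
  with l0 show False by simp
qed


lemma linear_bounded:
  fixes f :: "'a \<Rightarrow> 'b::real_normed_vector"
  assumes f: "linear f"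
  shows "bounded_linear f"
proof -
  obtain m where m: "m > 0" "\<And>x. m * (\<Sum>b\<in>B. \<bar>rep x b\<bar>) \<le> norm x" using coord_bound by blast
  define F where "F = (\<Sum>b\<in>B. norm (f b))"
  have "norm (f x) \<le> norm x * (F / m)" for x
  proof -
    have "f x = (\<Sum>b\<in>B. rep x b *\<^sub>R f b)"
      using linear_sum[OF f, of "\<lambda>b. rep x b *\<^sub>R b" B] rep_sum_eq[of x] linear_scale[OF f]
      by simp
    then have "norm (f x) \<le> (\<Sum>b\<in>B. \<bar>rep x b\<bar> * norm (f b))"
      by (simp add: norm_sum[THEN order_trans] sum_mono)
    also have "\<dots> \<le> (\<Sum>b\<in>B. \<bar>rep x b\<bar> * F)"
      by (rule sum_mono, rule mult_left_mono) (auto simp: F_def intro!: member_le_sum finB)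
    also have "\<dots> = (\<Sum>b\<in>B. \<bar>rep x b\<bar>) * F" by (simp add: sum_distrib_right)
    also have "\<dots> \<le> (norm x / m) * F"
      using m(2)[of x] m(1) by (intro mult_right_mono) (auto simp: F_def pos_le_divide_eq mult.commute intro: sum_nonneg)
    finally show ?thesis by simp
  qed
  then show ?thesis
    by (intro bounded_linear_intro[where K="F/m"]) (auto simp: linear_add[OF f] linear_scale[OF f])
qed

definition ip :: "'a \<Rightarrow> 'a \<Rightarrow> real" where
  "ip x y = (\<Sum>b\<in>B. rep x b * rep y b)"

lemma ip_add_left: "ip (x + y) z = ip x z + ip y z"
  by (simp add: ip_def rep_add distrib_right sum.distrib)
lemma ip_diff_left: "ip (x - y) z = ip x z - ip y z"
  by (simp add: ip_def rep_diff left_diff_distrib sum_subtractf)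
lemma ip_scale_left: "ip (c *\<^sub>R x) z = c * ip x z"
  by (simp add: ip_def rep_scale sum_distrib_left mult.assoc)
lemma ip_sym: "ip x y = ip y x"
  by (simp add: ip_def mult.commute)
lemma ip_add_right: "ip z (x + y) = ip z x + ip z y"
  by (simp add: ip_sym[of z] ip_add_left)
lemma ip_diff_right: "ip z (x - y) = ip z x - ip z y"
  by (simp add: ip_sym[of z] ip_diff_left)
lemma ip_scale_right: "ip z (c *\<^sub>R x) = c * ip z x"
  by (simp add: ip_sym[of z] ip_scale_left)
lemma ip_zero_left[simp]: "ip 0 z = 0"
  using ip_scale_left[of 0 0 z] by simp
lemma ip_zero_right[simp]: "ip z 0 = 0"
  using ip_zero_left ip_sym by metis
lemma ip_self_nonneg: "0 \<le> ip x x"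
  by (simp add: ip_def sum_nonneg)
lemma ip_self_eq0: "ip x x = 0 \<Longrightarrow> x = 0"
proof -
  assume "ip x x = 0"
  then have "\<forall>b\<in>B. rep x b * rep x b = 0"
    unfolding ip_def using finB by (subst (asm) sum_nonneg_eq_0_iff) auto
  then have "\<forall>b\<in>B. rep x b = 0" by simp
  then show "x = 0" using rep_sum_eq[of x] by simp
qed

lemma gram_schmidt:
  assumes "finite S"
  shows "\<exists>Q. linear Q \<and> (\<forall>x. Q x \<in> span S) \<and> (\<forall>v\<in>span S. Q v = v) \<and>
     (\<forall>x v. v \<in> span S \<longrightarrow> ip (x - Q x) v = 0)"
  using assms
proof (induction S rule: finite_induct)
  case empty
  show ?case by (rule exI[of _ "\<lambda>x. 0"]) (auto simp: linear_zero)
next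
  case (insert a S)
  then obtain Q where Q: "linear Q" "\<And>x. Q x \<in> span S" "\<And>v. v\<in>span S \<Longrightarrow> Q v = v"
     "\<And>x v. v \<in> span S \<Longrightarrow> ip (x - Q x) v = 0" by blast
  define a' where "a' = a - Q a"
  show ?case
  proof (cases "ip a' a' = 0")
    case True
    then have "a' = 0" by (rule ip_self_eq0)
    then have "a \<in> span S" using Q(2)[of a] by (simp add: a'_def)
    then have "span (insert a S) = span S" by (rule span_redundant)
    then show ?thesis using Q by metis
  next
    case False
    define Q' where "Q' x = Q x + (ip x a' / ip a' a') *\<^sub>R a'" for x
    have orth: "ip a' v = 0" if "v \<in> span S" for v using Q(4)[OF that, of a] by (simp add: a'_def)
    have orthQ: "ip (Q y) a' = 0" for y using orth[OF Q(2)[of y]] ip_sym by metis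
    have a'sp: "a' \<in> span (insert a S)"
      unfolding a'_def by (rule span_diff[OF span_base[OF insertI1] span_mono[THEN subsetD, OF subset_insertI Q(2)]])
    have Qa': "Q a' = 0"
    proof -
      have "Q a' = Q a - Q (Q a)" unfolding a'_def by (rule linear_diff[OF Q(1)])
      then show ?thesis using Q(3)[OF Q(2)[of a]] by simp
    qed
    have decomp: "\<exists>w t. w \<in> span S \<and> v = w + t *\<^sub>R a'" if vin: "v \<in> span (insert a S)" for v
    proof -
      obtain t where "v - t *\<^sub>R a \<in> span S" using vin span_breakdown_eq by blast
      then have "v - t *\<^sub>R a + t *\<^sub>R Q a \<in> span S" by (intro span_add span_scale Q(2))
      moreover have "v = (v - t *\<^sub>R a + t *\<^sub>R Q a) + t *\<^sub>R a'" by (simp add: a'_def algebra_simps)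
      ultimately show ?thesis by blast
    qed
    have "linear Q'"
      by (rule linearI) (simp_all add: Q'_def linear_add[OF Q(1)] linear_scale[OF Q(1)] ip_add_left
          ip_scale_left add_divide_distrib scaleR_add_left algebra_simps)
    moreover have "Q' x \<in> span (insert a S)" for x
      unfolding Q'_def by (intro span_add span_scale a'sp) (auto intro: span_mono[THEN subsetD] Q(2))
    moreover have "Q' v = v" if vin: "v \<in> span (insert a S)" for v
    proof -
      obtain w t where wt: "w \<in> span S" "v = w + t *\<^sub>R a'" using decomp[OF vin] by blast
      have "Q v = w" using wt Q(3)[OF wt(1)] linear_add[OF Q(1)] linear_scale[OF Q(1)] Qa' by simp
      moreover have "ip v a' = t * ip a' a'" using wt orth[OF wt(1)] ip_sym[of w a']
        by (simp add: ip_add_left ip_scale_left)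
      ultimately show ?thesis using wt False by (simp add: Q'_def)
    qed
    moreover have "ip (x - Q' x) v = 0" if vin: "v \<in> span (insert a S)" for x v
    proof -
      obtain w t where wt: "w \<in> span S" "v = w + t *\<^sub>R a'" using decomp[OF vin] by blast
      define c where "c = ip x a' / ip a' a'"
      have e: "x - Q' x = (x - Q x) - c *\<^sub>R a'" by (simp add: Q'_def c_def)
      have 1: "ip (x - Q' x) w = 0" unfolding e ip_diff_left ip_scale_left
        using Q(4)[OF wt(1), of x, unfolded ip_diff_left] orth[OF wt(1)] ip_sym[of w a'] by simp
      have "ip (x - Q x) a' = ip x a'" using orthQ[of x] by (simp add: ip_diff_left)
      then have 2: "ip (x - Q' x) a' = 0" unfolding e ip_diff_left ip_scale_left c_def using False by simp
      show ?thesis using 1 2 wt(2) by (simp add: ip_add_right ip_scale_right)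
    qed
    ultimately show ?thesis by blast
  qed
qed


definition En :: "'a \<Rightarrow> real" where "En x = sqrt (ip x x)"

lemma norm_le_En: "norm x \<le> En x * (\<Sum>b\<in>B. norm b)"
proof -
  have r: "\<bar>rep x b\<bar> \<le> En x" if "b \<in> B" for b
  proof -
    have "(rep x b)^2 \<le> ip x x" unfolding ip_def power2_eq_square
      by (rule member_le_sum) (use that finB in auto)
    then have "sqrt ((rep x b)^2) \<le> En x" unfolding En_def by (rule real_sqrt_le_mono)
    then show ?thesis by simp
  qed
  have "norm x = norm (\<Sum>b\<in>B. rep x b *\<^sub>R b)" using rep_sum_eq[of x] by simp
  also have "\<dots> \<le> (\<Sum>b\<in>B. \<bar>rep x b\<bar> * norm b)"
    by (simp add: norm_sum[THEN order_trans] sum_mono)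
  also have "\<dots> \<le> (\<Sum>b\<in>B. En x * norm b)"
    by (rule sum_mono, rule mult_right_mono) (auto simp: r)
  finally show ?thesis by (simp add: sum_distrib_left)
qed

lemma En_le_sum: "En x \<le> (\<Sum>b\<in>B. \<bar>rep x b\<bar>)"
  using L2_set_le_sum_abs[of "rep x" B] unfolding L2_set_def En_def ip_def power2_eq_square .

lemma uniform_proj:
  "\<exists>M\<ge>0. \<forall>V::'a set. subspace V \<longrightarrow>
     (\<exists>Q. linear Q \<and> range Q \<subseteq> V \<and> (\<forall>v\<in>V. Q v = v) \<and> (\<forall>x. norm (Q x) \<le> M * norm x))"
proof -
  obtain m where m: "m > 0" "\<And>x. m * (\<Sum>b\<in>B. \<bar>rep x b\<bar>) \<le> norm x" using coord_bound by blast
  define Nb where "Nb = (\<Sum>b\<in>B. norm b)"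
  have Nb0: "Nb \<ge> 0" unfolding Nb_def by (simp add: sum_nonneg)
  have "\<exists>Q. linear Q \<and> range Q \<subseteq> V \<and> (\<forall>v\<in>V. Q v = v) \<and> (\<forall>x. norm (Q x) \<le> (Nb / m) * norm x)"
    if V: "subspace V" for V :: "'a set"
  proof -
    obtain C where C: "C \<subseteq> V" "independent C" "V \<subseteq> span C" by (meson basis_exists)
    have finC: "finite C" using independent_span_bound[OF finB C(2)] spanB by auto
    have spC: "span C = V" using span_subspace[OF C(1) C(3) V] .
    obtain Q where Q: "linear Q" "\<And>x. Q x \<in> span C" "\<And>v. v\<in>span C \<Longrightarrow> Q v = v"
      "\<And>x v. v \<in> span C \<Longrightarrow> ip (x - Q x) v = 0" using gram_schmidt[OF finC] by blast
    have bessel: "ip (Q x) (Q x) \<le> ip x x" for x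
    proof -
      define r where "r = x - Q x"
      have o: "ip r (Q x) = 0" unfolding r_def by (rule Q(4)[OF Q(2)])
      have "ip x x = ip (Q x + r) (Q x + r)" by (simp add: r_def)
      also have "\<dots> = ip (Q x) (Q x) + 2 * ip r (Q x) + ip r r"
        by (simp add: ip_add_left ip_add_right ip_sym[of "Q x" r])
      finally show ?thesis using o ip_self_nonneg[of r] by simp
    qed
    have "norm (Q x) \<le> (Nb / m) * norm x" for x
    proof -
      have "norm (Q x) \<le> En (Q x) * Nb" using norm_le_En[of "Q x"] by (simp add: Nb_def)
      also have "\<dots> \<le> En x * Nb" unfolding En_def
        by (intro mult_right_mono real_sqrt_le_mono bessel Nb0)
      also have "\<dots> \<le> (norm x / m) * Nb"
      proof (rule mult_right_mono[OF _ Nb0])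
        have "m * En x \<le> m * (\<Sum>b\<in>B. \<bar>rep x b\<bar>)" using En_le_sum[of x] m(1) by simp
        then have "m * En x \<le> norm x" using m(2)[of x] by linarith
        then show "En x \<le> norm x / m" using m(1)
          by (simp add: pos_le_divide_eq mult.commute)
      qed
      finally show ?thesis by (simp add: mult.commute)
    qed
    then show ?thesis using Q spC by auto
  qed
  then show ?thesis using Nb0 m(1) by (intro exI[of _ "Nb / m"]) auto
qed


sublocale fd: finite_dimensional_vector_space "scaleR :: real \<Rightarrow> 'a \<Rightarrow> 'a" B
  by unfold_locales (use finB indB spanB in \<open>auto simp: dependent_raw_def[symmetric] span_raw_def[symmetric]\<close>)

lemma dim_pos_nonzero:
  fixes Y :: "'a set"
  assumes "dim Y \<ge> 1" shows "\<exists>v\<in>Y. v \<noteq> 0"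
  using assms fd.dim_eq_0[of Y, folded dim_raw_def] by auto



lemma sphere_nonempty:
  fixes Y :: "'a set"
  assumes "subspace Y" "dim Y \<ge> 1" shows "unit_sphere_of Y \<noteq> {}"
proof -
  obtain v where v: "v \<in> Y" "v \<noteq> 0" using dim_pos_nonzero[OF assms(2)] by blast
  have "(1 / norm v) *\<^sub>R v \<in> unit_sphere_of Y"
    using v assms(1) by (simp add: unit_sphere_of_def subspace_scale)
  then show ?thesis by blast
qed

lemma infdist_le_sd:
  fixes Y Y0 :: "'a set"
  assumes "subspace Y" "dim Y \<ge> 1" "u \<in> unit_sphere_of Y0"
  shows "infdist u (unit_sphere_of Y) \<le> subspace_dist Y Y0"
proof -
  obtain y0 where y0: "y0 \<in> unit_sphere_of Y" using sphere_nonempty[OF assms(1,2)] by blast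
  have "infdist w (unit_sphere_of Y) \<le> 2" if "w \<in> unit_sphere_of Y0" for w
  proof -
    have "infdist w (unit_sphere_of Y) \<le> dist w y0" by (rule infdist_le[OF y0])
    also have "\<dots> \<le> norm w + norm y0" by (simp add: dist_norm norm_triangle_ineq4)
    finally show ?thesis using that y0 by (simp add: unit_sphere_of_def)
  qed
  then have "bdd_above ((\<lambda>w. infdist w (unit_sphere_of Y)) ` unit_sphere_of Y0)"
    by (metis bdd_aboveI2)
  then have "infdist u (unit_sphere_of Y) \<le> (SUP w\<in>unit_sphere_of Y0. infdist w (unit_sphere_of Y))"
    using assms(3) by (rule cSUP_upper2) simp
  then show ?thesis unfolding subspace_dist_def hausdorff_dist_def by (simp add: le_max_iff_disj)
qed

lemma sd_nonneg:
  fixes Y Y0 :: "'a set"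
  assumes "subspace Y" "dim Y \<ge> 1" "subspace Y0" "dim Y0 \<ge> 1"
  shows "subspace_dist Y Y0 \<ge> 0"
proof -
  obtain u where "u \<in> unit_sphere_of Y0" using sphere_nonempty[OF assms(3,4)] by blast
  show ?thesis by (rule order_trans[OF infdist_nonneg infdist_le_sd[OF assms(1,2) \<open>u \<in> unit_sphere_of Y0\<close>]])
qed

lemma perturb:
  fixes P :: "'a \<Rightarrow> 'a" and Y Y0 :: "'a set"
  assumes P: "linear P" "range P \<subseteq> Y" "\<forall>y\<in>Y. P y = y"
    and Y: "subspace Y" "subspace Y0" "dim Y0 = dim Y" "dim Y \<ge> 1"
    and small: "onorm P * subspace_dist Y Y0 \<le> 1/2"
  shows "\<exists>Q. linear Q \<and> range Q \<subseteq> Y0 \<and> (\<forall>v\<in>Y0. Q v = v) \<and>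
     (\<forall>x. norm (Q x) \<le> (onorm P + 2 * (onorm P)^2 * subspace_dist Y Y0) * norm x)"
proof -
  define p where "p = onorm P"
  define d where "d = subspace_dist Y Y0"
  have blP: "bounded_linear P" by (rule linear_bounded[OF P(1)])
  have Pn: "norm (P x) \<le> p * norm x" for x unfolding p_def by (rule onorm[OF blP])
  have p0: "p \<ge> 0" unfolding p_def by (rule onorm_pos_le[OF blP])
  have d0: "d \<ge> 0" unfolding d_def using sd_nonneg Y by simp
  have SYne: "unit_sphere_of Y \<noteq> {}" using sphere_nonempty[OF Y(1,4)] .
  have key1: "1 - p * d \<le> norm (P u)" if u: "u \<in> Y0" "norm u = 1" for u
  proof (rule field_le_epsilon)
    fix e :: real assume e: "e > 0"
    have "u \<in> unit_sphere_of Y0" using u by (simp add: unit_sphere_of_def)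
    from infdist_le_sd[OF Y(1,4) this] have "infdist u (unit_sphere_of Y) \<le> d" by (simp add: d_def)
    moreover have ep: "e / (p + 1) > 0" using e p0 by simp
    ultimately have "Inf ((\<lambda>a. dist u a) ` unit_sphere_of Y) < d + e / (p + 1)"
      using infdist_notempty[OF SYne, of u] by simp
    then obtain y where y: "y \<in> unit_sphere_of Y" "dist u y < d + e / (p + 1)"
      using cInf_lessD[of "(\<lambda>a. dist u a) ` unit_sphere_of Y"] SYne by auto
    have yY: "y \<in> Y" "norm y = 1" using y(1) by (auto simp: unit_sphere_of_def)
    have "P u = y + P (u - y)" using P(3) yY linear_diff[OF P(1), of u y] by simp
    then have "1 \<le> norm (P u) + norm (P (u - y))"
      using norm_triangle_ineq4[of "P u" "P (u - y)"] yY by (metis add_diff_cancel_right' norm_triangle_ineq2 diff_le_eq)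
    moreover have "norm (P (u - y)) \<le> p * (d + e / (p + 1))"
      using Pn[of "u - y"] y(2) p0 by (simp add: dist_norm) (meson less_imp_le mult_left_mono order_trans)
    moreover have "p * (e / (p + 1)) \<le> e" using p0 e by (simp add: field_simps)
    ultimately show "1 - p * d \<le> norm (P u) + e" by (simp add: algebra_simps)
  qed
  have key2: "(1 - p * d) * norm v \<le> norm (P v)" if v: "v \<in> Y0" for v
  proof (cases "v = 0")
    case True then show ?thesis using linear_0[OF P(1)] by simp
  next
    case False
    define u where "u = (1 / norm v) *\<^sub>R v"
    have "u \<in> Y0" "norm u = 1" using v False Y(2) by (auto simp: u_def subspace_scale)
    from key1[OF this] have "1 - p * d \<le> norm (P v) / norm v"
      using linear_scale[OF P(1)] False by (simp add: u_def)
    then show ?thesis using False by (simp add: pos_le_divide_eq)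
  qed
  define c where "c = 1 - p * d"
  have c: "c \<ge> 1/2" using small by (simp add: c_def p_def d_def)
  have inj: "v = 0" if "v \<in> Y0" "P v = 0" for v
  proof -
    have "c * norm v \<le> 0" using key2[OF that(1)] that(2) by (simp add: c_def)
    then have "norm v \<le> 0" using c by (simp add: mult_le_0_iff)
    then show ?thesis by simp
  qed
  have injon: "inj_on P Y0"
  proof (rule inj_onI)
    fix x y assume "x \<in> Y0" "y \<in> Y0" "P x = P y"
    then have "x - y = 0" using inj[of "x - y"] Y(2) linear_diff[OF P(1)] by (simp add: subspace_diff)
    then show "x = y" by simp
  qed
  have surj: "Y \<subseteq> P ` Y0"
  proof -
    obtain C where C: "C \<subseteq> Y0" "independent C" "Y0 \<subseteq> span C" "card C = dim Y0"
      by (meson basis_exists)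
    have spC: "span C = Y0" using span_subspace[OF C(1) C(3) Y(2)] .
    have injC: "inj_on P (span C)" using injon spC by simp
    have indPC: "independent (P ` C)" by (rule linear_independent_injective_image[OF P(1) C(2) injC])
    have cardPC: "card (P ` C) = card C"
      by (rule card_image) (use injC span_superset in \<open>blast intro: inj_on_subset\<close>)
    have "P ` C \<subseteq> Y" using P(2) by auto
    from fd.card_ge_dim_independent[folded dim_raw_def span_raw_def dependent_raw_def, OF this indPC]
    have "Y \<subseteq> span (P ` C)" using cardPC C(4) Y(3) by simp
    also have "\<dots> = P ` Y0" using linear_span_image[OF P(1)] spC by simp
    finally show ?thesis .
  qed
  define Q where "Q x = (SOME v. v \<in> Y0 \<and> P v = P x)" for x
  have QP: "Q x \<in> Y0 \<and> P (Q x) = P x" for x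
  proof -
    have "P x \<in> P ` Y0" using surj P(2) by blast
    then have "\<exists>v. v \<in> Y0 \<and> P v = P x" by auto
    then show ?thesis unfolding Q_def by (rule someI_ex)
  qed
  have uniq: "Q x = v" if "v \<in> Y0" "P v = P x" for x v
    using injon QP[of x] that by (metis inj_on_def)
  have linQ: "linear Q"
  proof (rule linearI)
    fix x y
    show "Q (x + y) = Q x + Q y"
      by (rule uniq) (use QP[of x] QP[of y] Y(2) linear_add[OF P(1)] in \<open>auto simp: subspace_add\<close>)
  next
    fix r x
    show "Q (r *\<^sub>R x) = r *\<^sub>R Q x"
      by (rule uniq) (use QP[of x] Y(2) linear_scale[OF P(1)] in \<open>auto simp: subspace_scale\<close>)
  qed
  have "norm (Q x) \<le> (p + 2 * p^2 * d) * norm x" for x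
  proof -
    have "c * norm (Q x) \<le> p * norm x" using key2[of "Q x"] QP[of x] Pn[of x] by (simp add: c_def)
    moreover have "p \<le> (p + 2 * p^2 * d) * c"
    proof -
      have "(p + 2 * p^2 * d) * c = p + p^2 * d * (1 - 2 * (p * d))"
        by (simp add: c_def algebra_simps power2_eq_square)
      moreover have "p^2 * d * (1 - 2 * (p * d)) \<ge> 0" using small d0 by (simp add: p_def d_def)
      ultimately show ?thesis by simp
    qed
    ultimately have "c * norm (Q x) \<le> c * ((p + 2 * p^2 * d) * norm x)"
      by (smt (verit) mult.assoc mult.commute mult_right_mono norm_ge_zero)
    then show ?thesis using c by simp
  qed
  then show ?thesis using linQ QP uniq unfolding p_def d_def by auto
qed


lemma main_fdb:
  fixes Y :: "'a set" and k :: nat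
  assumes Y: "subspace Y" "dim Y = k" "1 \<le> k"
  shows "\<exists>C>0. \<forall>Y0 :: 'a set. subspace Y0 \<and> dim Y0 = k \<longrightarrow>
           proj_const Y0 \<le> proj_const Y + C * subspace_dist Y Y0"
proof -
  obtain M where M: "M \<ge> 0" "\<And>V::'a set. subspace V \<Longrightarrow>
     \<exists>Q. linear Q \<and> range Q \<subseteq> V \<and> (\<forall>v\<in>V. Q v = v) \<and> (\<forall>x. norm (Q x) \<le> M * norm x)"
    using uniform_proj by blast
  define SS where "SS V = {onorm P | P. linear P \<and> range P \<subseteq> V \<and> (\<forall>v\<in>V. P v = v)}" for V :: "'a set"
  have pc: "proj_const V = Inf (SS V)" for V :: "'a set" unfolding proj_const_def SS_def ..
  have ne: "SS V \<noteq> {}" if "subspace V" for V :: "'a set" using M(2)[OF that] unfolding SS_def by blast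
  have bdd: "bdd_below (SS V)" for V :: "'a set"
    unfolding SS_def by (rule bdd_belowI[of _ 0]) (auto intro!: onorm_pos_le linear_bounded)
  have lower: "proj_const V \<le> onorm Q" if "linear Q" "range Q \<subseteq> V" "\<forall>v\<in>V. Q v = v" for V :: "'a set" and Q
    unfolding pc by (rule cInf_lower[OF _ bdd]) (use that in \<open>auto simp: SS_def\<close>)
  have leM: "proj_const V \<le> M" if sV: "subspace V" for V :: "'a set"
  proof -
    obtain Q where Q: "linear Q" "range Q \<subseteq> V" "\<forall>v\<in>V. Q v = v" "\<And>x. norm (Q x) \<le> M * norm x"
      using M(2)[OF sV] by blast
    have "onorm Q \<le> M" by (rule onorm_bound[OF M(1) Q(4)])
    with lower[OF Q(1-3)] show ?thesis by simp
  qed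
  have ge0: "proj_const V \<ge> 0" if "subspace V" for V :: "'a set"
    unfolding pc by (rule cInf_greatest[OF ne[OF that]]) (auto simp: SS_def intro!: onorm_pos_le linear_bounded)
  define L where "L = proj_const Y + 1"
  have L: "L \<ge> 1" using ge0[OF Y(1)] by (simp add: L_def)
  define \<delta> where "\<delta> = 1 / (2 * L)"
  have \<delta>: "\<delta> > 0" using L by (simp add: \<delta>_def)
  define C where "C = 2 * L^2 + M / \<delta> + 1"
  have C: "C > 0"
  proof -
    have "M / \<delta> \<ge> 0" using M(1) \<delta> by simp
    moreover have "2 * L^2 \<ge> 0" by simp
    ultimately show ?thesis unfolding C_def by linarith
  qed
  have "proj_const Y0 \<le> proj_const Y + C * subspace_dist Y Y0" if Y0: "subspace Y0" "dim Y0 = k" for Y0 :: "'a set"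
  proof -
    define d where "d = subspace_dist Y Y0"
    have d0: "d \<ge> 0" unfolding d_def using sd_nonneg Y Y0 by simp
    show ?thesis
    proof (cases "d \<ge> \<delta>")
      case True
      have "M = (M / \<delta>) * \<delta>" using \<delta> by simp
      also have "\<dots> \<le> (M / \<delta>) * d" using True M(1) \<delta> by (intro mult_left_mono) auto
      also have "\<dots> \<le> C * d" using d0 M(1) \<delta> by (intro mult_right_mono) (auto simp: C_def)
      finally show ?thesis using leM[OF Y0(1)] ge0[OF Y(1)] by (simp add: d_def)
    next
      case False
      show ?thesis
      proof (rule field_le_epsilon)
        fix e :: real assume e: "e > 0"
        define e' where "e' = min e 1"
        have "Inf (SS Y) < proj_const Y + e'" using e by (simp add: pc e'_def)
        then obtain P where P: "linear P" "range P \<subseteq> Y" "\<forall>v\<in>Y. P v = v" "onorm P < proj_const Y + e'"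
          using cInf_lessD[OF ne[OF Y(1)]] unfolding SS_def by blast
        define p where "p = onorm P"
        have p0: "p \<ge> 0" unfolding p_def by (rule onorm_pos_le[OF linear_bounded[OF P(1)]])
        have pL: "p \<le> L" using P(4) by (simp add: p_def L_def e'_def)
        have "p * d \<le> L * \<delta>" using pL False d0 p0 L by (intro mult_mono) auto
        also have "L * \<delta> = 1/2" using L by (simp add: \<delta>_def)
        finally have small: "onorm P * subspace_dist Y Y0 \<le> 1/2" by (simp add: p_def d_def)
        obtain Q where Q: "linear Q" "range Q \<subseteq> Y0" "\<forall>v\<in>Y0. Q v = v"
          "\<And>x. norm (Q x) \<le> (p + 2 * p^2 * d) * norm x"
          using perturb[OF P(1-3) Y(1) Y0(1) _ _ small] Y Y0 unfolding p_def d_def by auto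
        have "onorm Q \<le> p + 2 * p^2 * d" by (rule onorm_bound) (use p0 d0 Q(4) in auto)
        then have "proj_const Y0 \<le> p + 2 * p^2 * d" using lower[OF Q(1-3)] by simp
        also have "\<dots> \<le> proj_const Y + e + 2 * L^2 * d"
        proof -
          have "p^2 \<le> L^2" using pL p0 by (simp add: power_mono)
          then have "2 * p^2 * d \<le> 2 * L^2 * d" using d0 by (simp add: mult_right_mono)
          moreover have "p \<le> proj_const Y + e" using P(4) by (simp add: p_def e'_def)
          ultimately show ?thesis by simp
        qed
        also have "\<dots> \<le> proj_const Y + C * d + e"
        proof -
          have "2 * L^2 * d \<le> C * d" using d0 M(1) \<delta> by (intro mult_right_mono) (auto simp: C_def)
          then show ?thesis by simp
        qed
        finally show "proj_const Y0 \<le> proj_const Y + C * subspace_dist Y Y0 + e" by (simp add: d_def)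
      qed
    qed
  qed
  with C show ?thesis by blast
qed

end

theorem mainTheorem15:
  fixes Y :: "'a::real_normed_vector set" and n k :: nat
  assumes "\<exists>B. finite B \<and> span B = (UNIV :: 'a set)"
    and "dim (UNIV :: 'a set) = n"
    and "subspace Y" and "dim Y = k"
    and "1 \<le> k" and "k \<le> n - 1"
  shows "\<exists>C>0. \<forall>Y0 :: 'a set. subspace Y0 \<and> dim Y0 = k \<longrightarrow>
           proj_const Y0 \<le> proj_const Y + C * subspace_dist Y Y0"
proof -
  obtain B where B: "finite B" "span B = (UNIV :: 'a set)" using assms(1) by blast
  obtain B0 :: "'a set" where B0: "independent B0" "UNIV \<subseteq> span B0"
    by (meson basis_exists)
  have "finite B0" using independent_span_bound[OF B(1) B0(1)] B(2) by auto
  then interpret fdb B0 by unfold_locales (use B0 in auto)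
  show ?thesis by (rule main_fdb[OF assms(3,4,5)])
qed

end
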